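(* Let $\mathbf K\in\mathbb R^{n\times d}$ have rows $\mathbf k_1,\dots,\mathbf k_n$, let $R_{\mathbf K}=\|\mathbf K\|_{2,\infty}>0$, $\beta>0$, $\tau>0$. Let $\mathbf H_\tau=\big(\exp(\tfrac{\beta}{\tau^2}\langle\mathbf k_i,\mathbf k_l\rangle)\big)_{i,l\in[n]}$ and, for $s\in\{0,1,2,\dots\}$, $\mathbf T^s_{il}=\sum_{p=0}^s\frac{1}{p!}\big(\tfrac{\beta}{\tau^2}\langle\mathbf k_i,\mathbf k_l\rangle\big)^p$. For $\varepsilon>0$ define $$\tilde s(\varepsilon)\defeq\frac{\log(n/\varepsilon)+\beta R_{\mathbf K}^2/\tau^2}{W_0\!\left(\frac{\log(n/\varepsilon)\,\tau^2}{e\beta R_{\mathbf K}^2}+\frac1e\right)}.$$ Then $\|\mathbf H_\tau-\mathbf T^s\|_*\le\varepsilon$ for all integers $s\ge\lfloor\tilde s(\varepsilon)\rfloor$.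
   Context: $W_0$ is the principal branch of the Lambert W function ($w=W_0(z)$ is the unique solution $w>-1$ of $we^w=z$ for $z>-1/e$). $\|\mathbf K\|_{2,\infty}$ is the maximal Euclidean row norm, and $\|\cdot\|_*$ the nuclear norm. *)

theory Defs
  imports "HOL-Analysis.Analysis"
begin

definition lambert_W0 :: "real \<Rightarrow> real" where
  "lambert_W0 z = (THE w. w \<ge> -1 \<and> w * exp w = z)"

definition psd_matrix :: "real^'n^'n \<Rightarrow> bool" where
  "psd_matrix B \<longleftrightarrow> transpose B = B \<and> (\<forall>x. 0 \<le> x \<bullet> (B *v x))"

definition psd_sqrt :: "real^'n^'n \<Rightarrow> real^'n^'n" where
  "psd_sqrt M = (THE B. psd_matrix B \<and> B ** B = M)"

definition nuclear_norm :: "real^'m^'n \<Rightarrow> real" where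
  "nuclear_norm A = trace (psd_sqrt (transpose A ** A))"

definition norm_2_inf :: "real^'d^'n \<Rightarrow> real" where
  "norm_2_inf K = Max (range (\<lambda>i. norm (K $ i)))"

end

theory Submission imports Defs begin
lemma psd_sym_inner:
  fixes S :: "real^'n^'n"
  assumes "transpose S = S"
  shows "x \<bullet> (S *v y) = y \<bullet> (S *v x)"
proof -
  have "x \<bullet> (S *v y) = (x v* S) \<bullet> y" by (simp add: dot_lmul_matrix)
  also have "x v* S = transpose S *v x" by simp
  finally show ?thesis using assms by (simp add: inner_commute)
qed

lemma quad_zero_lemma:
  fixes b c :: real
  assumes "\<And>t. 0 \<le> 2*t*b + t^2*c" "0 \<le> c"
  shows "b = 0"
proof (rule ccontr)
  assume "b \<noteq> 0"
  define t where "t = - b/(c+1)"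
  have c1: "c + 1 \<noteq> 0" using assms(2) by linarith
  have "2*t*b + t^2*c = b^2 * (- c - 2)/(c+1)^2"
    using c1 by (simp add: t_def divide_simps power2_eq_square) (simp add: algebra_simps)
  also have "\<dots> < 0" using \<open>b \<noteq> 0\<close> assms(2)
    by (intro divide_neg_pos mult_pos_neg) auto
  finally show False using assms(1)[of t] by linarith
qed

lemma transpose_diff': "transpose ((A::real^'n^'m) - B) = transpose A - transpose B"
  by (simp add: transpose_def vec_eq_iff)
lemma transpose_add': "transpose ((A::real^'n^'m) + B) = transpose A + transpose B"
  by (simp add: transpose_def vec_eq_iff)

lemma mm_add_r: "((A::real^'n^'m) + B) ** (C::real^'k^'n) = A ** C + B ** C"
  by (simp add: matrix_matrix_mult_def vec_eq_iff sum.distrib distrib_right)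
lemma mm_diff_r: "((A::real^'n^'m) - B) ** (C::real^'k^'n) = A ** C - B ** C"
  by (simp add: matrix_matrix_mult_def vec_eq_iff sum_subtractf left_diff_distrib)
lemma mm_diff_l: "(C::real^'n^'m) ** ((A::real^'k^'n) - B) = C ** A - C ** B"
  by (simp add: matrix_matrix_mult_def vec_eq_iff sum_subtractf right_diff_distrib)
lemma mm_neg_r: "(C::real^'n^'m) ** (- (A::real^'k^'n)) = - (C ** A)"
  by (simp add: matrix_matrix_mult_def vec_eq_iff sum_negf)

lemma psd_quad_zero:
  fixes S :: "real^'n^'n"
  assumes "psd_matrix S" "x \<bullet> (S *v x) = 0"
  shows "S *v x = 0"
proof -
  have sym: "transpose S = S" and pos: "\<And>x. 0 \<le> x \<bullet> (S *v x)" using assms(1) by (auto simp: psd_matrix_def)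
  define y where "y = S *v x"
  have "0 \<le> 2*t*(y \<bullet> (S *v x)) + t^2*(y \<bullet> (S *v y))" for t
  proof -
    have "0 \<le> (x + t *\<^sub>R y) \<bullet> (S *v (x + t *\<^sub>R y))" by (rule pos)
    also have "\<dots> = x \<bullet> (S *v x) + t * (x \<bullet> (S *v y)) + t * (y \<bullet> (S *v x)) + t^2 * (y \<bullet> (S *v y))"
      by (simp add: matrix_vector_right_distrib matrix_vector_mult_scaleR inner_add_left inner_add_right algebra_simps power2_eq_square)
    finally show ?thesis using assms(2) psd_sym_inner[OF sym, of x y] by (simp add: algebra_simps)
  qed
  from quad_zero_lemma[OF this pos] have "y \<bullet> y = 0" by (simp add: y_def)
  thus ?thesis by (simp add: y_def)
qed

lemma trace_DSD:
  fixes S D :: "real^'n^'n"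
  assumes "transpose D = D"
  shows "trace (D ** S ** D) = (\<Sum>j\<in>UNIV. (D $ j) \<bullet> (S *v (D $ j)))"
proof -
  have sy: "D$b$j = D$j$b" for b j using assms by (metis transpose_def vec_lambda_beta)
  have "trace (D ** S ** D) = (\<Sum>j\<in>UNIV. \<Sum>b\<in>UNIV. (\<Sum>a\<in>UNIV. D$j$a * S$a$b) * D$j$b)"
    by (simp add: trace_def matrix_matrix_mult_def sy)
  also have "\<dots> = (\<Sum>j\<in>UNIV. \<Sum>b\<in>UNIV. \<Sum>a\<in>UNIV. D$j$a * (S$a$b * D$j$b))"
    by (simp add: sum_distrib_right mult.assoc)
  also have "\<dots> = (\<Sum>j\<in>UNIV. \<Sum>a\<in>UNIV. \<Sum>b\<in>UNIV. D$j$a * (S$a$b * D$j$b))"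
    by (intro sum.cong refl sum.swap)
  also have "\<dots> = (\<Sum>j\<in>UNIV. (D $ j) \<bullet> (S *v (D $ j)))"
    by (simp add: inner_vec_def matrix_vector_mult_def sum_distrib_left)
  finally show ?thesis .
qed

lemma trace_DSD_nonneg:
  fixes S D :: "real^'n^'n"
  assumes "transpose D = D" "psd_matrix S"
  shows "0 \<le> trace (D ** S ** D)"
  using assms by (auto simp: trace_DSD psd_matrix_def intro: sum_nonneg)

lemma trace_DSD_zero:
  fixes S D :: "real^'n^'n"
  assumes "transpose D = D" "psd_matrix S" "trace (D ** S ** D) = 0"
  shows "S ** D = 0"
proof -
  have "\<forall>j\<in>UNIV. (D $ j) \<bullet> (S *v (D $ j)) = 0"
    using assms by (subst sum_nonneg_eq_0_iff[symmetric]) (auto simp: trace_DSD psd_matrix_def)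
  hence z: "S *v (D $ j) = 0" for j using psd_quad_zero[OF assms(2)] by auto
  have "D$b$j = D$j$b" for b j using assms by (metis transpose_def vec_lambda_beta)
  hence "(S ** D) $ a $ j = (S *v (D $ j)) $ a" for a j
    by (simp add: matrix_matrix_mult_def matrix_vector_mult_def)
  thus ?thesis using z by (simp add: vec_eq_iff)
qed

lemma psd_unique:
  fixes B C :: "real^'n^'n"
  assumes B: "psd_matrix B" and C: "psd_matrix C" and eq: "B ** B = C ** C"
  shows "B = C"
proof -
  define D where "D = B - C"
  define S where "S = B + C"
  have tB: "transpose B = B" and tC: "transpose C = C" using B C by (auto simp: psd_matrix_def)
  have tD: "transpose D = D" using tB tC by (simp add: D_def transpose_diff')
  have pS: "psd_matrix S" using B C
    by (auto simp: psd_matrix_def S_def transpose_add' matrix_vector_mult_add_rdistrib inner_add_right intro: add_nonneg_nonneg)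
  have "S ** D + D ** S = 0"
    using eq by (simp add: S_def D_def matrix_add_ldistrib mm_add_r mm_diff_l mm_diff_r algebra_simps)
  hence "D ** (S ** D + D ** S) = 0" by simp
  hence "D ** S ** D + D ** D ** S = 0" by (simp add: matrix_add_ldistrib matrix_mul_assoc)
  hence "trace (D ** S ** D) + trace (D ** D ** S) = 0" by (metis trace_add trace_0 mat_0)
  moreover have "trace (D ** D ** S) = trace (D ** S ** D)"
    by (metis matrix_mul_assoc trace_mul_sym)
  ultimately have "trace (D ** S ** D) = 0" by simp
  hence SD: "S ** D = 0" using trace_DSD_zero[OF tD pS] by simp
  hence BD: "B ** D = - (C ** D)" by (simp add: S_def mm_add_r eq_neg_iff_add_eq_0)
  have "D ** B ** D = - (D ** C ** D)" using BD
    by (metis matrix_mul_assoc mm_neg_r)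
  hence "trace (D ** B ** D) = - trace (D ** C ** D)" by (simp add: trace_def sum_negf)
  with trace_DSD_nonneg[OF tD B] trace_DSD_nonneg[OF tD C]
  have "trace (D ** B ** D) = 0" "trace (D ** C ** D) = 0" by linarith+
  hence "B ** D = 0" "C ** D = 0" using trace_DSD_zero[OF tD B] trace_DSD_zero[OF tD C] by auto
  hence "D ** D = 0" by (simp add: D_def mm_diff_r)
  hence "trace (D ** mat 1 ** D) = 0" by (simp add: trace_def)
  moreover have "psd_matrix (mat 1 :: real^'n^'n)" by (simp add: psd_matrix_def transpose_mat)
  ultimately have "mat 1 ** D = 0" using trace_DSD_zero[OF tD] by blast
  thus ?thesis by (simp add: D_def matrix_mul_lid)
qed

lemma nuclear_norm_psd:
  fixes A :: "real^'n^'n"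
  assumes "psd_matrix A"
  shows "nuclear_norm A = trace A"
proof -
  have "transpose A = A" using assms by (simp add: psd_matrix_def)
  hence "psd_sqrt (transpose A ** A) = A"
    unfolding psd_sqrt_def using assms psd_unique by (intro the_equality) auto
  thus ?thesis by (simp add: nuclear_norm_def)
qed

lemma gram_nonneg:
  fixes K :: "real^'d^'n"
  shows "0 \<le> (\<Sum>i\<in>UNIV. \<Sum>l\<in>UNIV. x i * x l * (K$i \<bullet> K$l)^p)"
proof (induction p arbitrary: x)
  case 0
  have "(\<Sum>i\<in>UNIV. \<Sum>l\<in>UNIV. x i * x l * (K$i \<bullet> K$l)^0) = (\<Sum>i\<in>UNIV. x i) * (\<Sum>l\<in>UNIV. x l)"
    by (simp add: sum_product)
  thus ?case by simp
next
  case (Suc p)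
  have trm: "x i * x l * (K$i \<bullet> K$l)^Suc p = (\<Sum>j\<in>UNIV. (x i * K$i$j) * (x l * K$l$j) * (K$i \<bullet> K$l)^p)" for i l
  proof -
    define g where "g = K$i \<bullet> K$l"
    have gdef: "g = (\<Sum>j\<in>UNIV. K$i$j * K$l$j)" by (simp add: g_def inner_vec_def)
    have "x i * x l * g^Suc p = (x i * x l * g^p) * g" by (simp add: mult_ac)
    also have "\<dots> = (x i * x l * g^p) * (\<Sum>j\<in>UNIV. K$i$j * K$l$j)" using gdef by simp
    also have "\<dots> = (\<Sum>j\<in>UNIV. (x i * x l * g^p) * (K$i$j * K$l$j))" by (rule sum_distrib_left)
    also have "\<dots> = (\<Sum>j\<in>UNIV. (x i * K$i$j) * (x l * K$l$j) * g^p)" by (intro sum.cong refl) (simp add: mult_ac)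
    finally show ?thesis by (simp add: g_def)
  qed
  have "(\<Sum>i\<in>UNIV. \<Sum>l\<in>UNIV. x i * x l * (K$i \<bullet> K$l)^Suc p)
      = (\<Sum>i\<in>UNIV. \<Sum>l\<in>UNIV. \<Sum>j\<in>UNIV. (x i * K$i$j) * (x l * K$l$j) * (K$i \<bullet> K$l)^p)"
    by (simp only: trm)
  also have "\<dots> = (\<Sum>i\<in>UNIV. \<Sum>j\<in>UNIV. \<Sum>l\<in>UNIV. (x i * K$i$j) * (x l * K$l$j) * (K$i \<bullet> K$l)^p)"
    by (intro sum.cong refl sum.swap)
  also have "\<dots> = (\<Sum>j\<in>UNIV. \<Sum>i\<in>UNIV. \<Sum>l\<in>UNIV. (x i * K$i$j) * (x l * K$l$j) * (K$i \<bullet> K$l)^p)"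
    by (rule sum.swap)
  also have "\<dots> \<ge> 0" by (rule sum_nonneg) (rule Suc.IH)
  finally show ?case .
qed

definition tailx :: "nat \<Rightarrow> real \<Rightarrow> real" where
  "tailx s t = exp t - (\<Sum>p = 0..s. t^p / fact p)"

lemma tl_sums: "(\<lambda>p. if s < p then t^p / fact p else 0) sums tailx s t"
proof -
  have e: "(\<lambda>p. t^p / fact p) sums exp t" using exp_converges[of t] by (simp add: divide_inverse mult.commute)
  have f: "(\<lambda>p. if p \<in> {0..s} then t^p / fact p else 0) sums (\<Sum>p = 0..s. t^p / fact p)"
    by (rule sums_If_finite_set) simp
  have "(\<lambda>p. t^p / fact p - (if p \<in> {0..s} then t^p / fact p else 0)) sums tailx s t"
    unfolding tailx_def by (rule sums_diff[OF e f])
  moreover have "(\<lambda>p. t^p / fact p - (if p \<in> {0..s} then t^p / fact p else 0)) = (\<lambda>p. if s < p then t^p / fact p else 0)"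
    by (auto simp: fun_eq_iff)
  ultimately show ?thesis by simp
qed

lemma psd_tail:
  fixes K :: "real^'d^'n" and A :: "real^'n^'n"
  assumes A: "\<And>i l. A$i$l = tailx s (c * (K$i \<bullet> K$l))" and c: "0 \<le> c"
  shows "psd_matrix A"
  unfolding psd_matrix_def
proof (intro conjI allI)
  show "transpose A = A" by (simp add: transpose_def vec_eq_iff A inner_commute)
next
  fix x :: "real^'n"
  have eq: "x \<bullet> (A *v x) = (\<Sum>i\<in>UNIV. \<Sum>l\<in>UNIV. x$i * x$l * A$i$l)"
  proof -
    have "x \<bullet> (A *v x) = (\<Sum>i\<in>UNIV. x$i * (\<Sum>l\<in>UNIV. A$i$l * x$l))"
      by (simp add: inner_vec_def matrix_vector_mult_def)
    also have "\<dots> = (\<Sum>i\<in>UNIV. \<Sum>l\<in>UNIV. x$i * x$l * A$i$l)"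
      unfolding sum_distrib_left by (intro sum.cong refl) (simp add: mult_ac)
    finally show ?thesis .
  qed
  have each: "(\<lambda>p. x$i * x$l * (if s < p then (c * (K$i \<bullet> K$l))^p / fact p else 0)) sums (x$i * x$l * A$i$l)" for i l
    unfolding A by (rule sums_mult, rule tl_sums)
  have sm: "(\<lambda>p. \<Sum>i\<in>UNIV. \<Sum>l\<in>UNIV. x$i * x$l * (if s < p then (c * (K$i \<bullet> K$l))^p / fact p else 0))
        sums (\<Sum>i\<in>UNIV. \<Sum>l\<in>UNIV. x$i * x$l * A$i$l)"
    by (rule sums_sum, rule sums_sum, rule each)
  have nn: "0 \<le> (\<Sum>i\<in>UNIV. \<Sum>l\<in>UNIV. x$i * x$l * (if s < p then (c * (K$i \<bullet> K$l))^p / fact p else 0))" for p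
  proof (cases "s < p")
    case True
    have "(\<Sum>i\<in>UNIV. \<Sum>l\<in>UNIV. x$i * x$l * (if s < p then (c * (K$i \<bullet> K$l))^p / fact p else 0))
       = c^p / fact p * (\<Sum>i\<in>UNIV. \<Sum>l\<in>UNIV. x$i * x$l * (K$i \<bullet> K$l)^p)"
    proof -
      have "x$i * x$l * (if s < p then (c * (K$i \<bullet> K$l))^p / fact p else 0) = c^p / fact p * (x$i * x$l * (K$i \<bullet> K$l)^p)" for i l
        using True by (simp add: power_mult_distrib)
      thus ?thesis by (simp add: sum_distrib_left)
    qed
    also have "\<dots> \<ge> 0" using c gram_nonneg[of "\<lambda>i. x$i" K p] by simp
    finally show ?thesis .
  next
    case False
    thus ?thesis by simp
  qed
  have "0 \<le> (\<Sum>i\<in>UNIV. \<Sum>l\<in>UNIV. x$i * x$l * A$i$l)"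
    by (rule sums_le[OF nn sums_zero sm])
  thus "0 \<le> x \<bullet> (A *v x)" using eq by simp
qed

lemma tl_bound1:
  assumes "0 \<le> t" "t \<le> a"
  shows "tailx s t \<le> exp a * a^(Suc s) / fact (Suc s)"
proof -
  obtain u where u: "\<bar>u\<bar> \<le> \<bar>t\<bar>" "exp t = (\<Sum>m<Suc s. t^m / fact m) + (exp u / fact (Suc s)) * t^(Suc s)"
    using Maclaurin_exp_le[of t "Suc s"] by blast
  have "(\<Sum>m<Suc s. t^m / fact m) = (\<Sum>p = 0..s. t^p / fact p)"
    by (simp add: atLeast0AtMost lessThan_Suc_atMost)
  hence "tailx s t = exp u * t^(Suc s) / fact (Suc s)" using u by (simp add: tailx_def)
  also have "\<dots> \<le> exp a * a^(Suc s) / fact (Suc s)"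
    using u assms by (intro divide_right_mono mult_mono power_mono) auto
  finally show ?thesis .
qed

lemma tl_bound2:
  assumes "0 \<le> t" "t \<le> a"
  shows "tailx s t \<le> exp a"
proof -
  have "0 \<le> (\<Sum>p = 0..s. t^p / fact p)" using assms by (intro sum_nonneg) auto
  moreover have "exp t \<le> exp a" using assms by simp
  ultimately show ?thesis unfolding tailx_def by linarith
qed

lemma fact_bound:
  fixes m :: nat and a :: real
  assumes "0 < m" "0 \<le> a"
  shows "a^m / fact m \<le> exp (real m) * (a / m)^m"
proof -
  obtain u where u: "\<bar>u\<bar> \<le> \<bar>real m\<bar>" "exp (real m) = (\<Sum>k<Suc m. (real m)^k / fact k) + (exp u / fact (Suc m)) * (real m)^(Suc m)"
    using Maclaurin_exp_le[of "real m" "Suc m"] by blast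
  have "(real m)^m / fact m \<le> (\<Sum>k<Suc m. (real m)^k / fact k)"
    by (rule member_le_sum) auto
  also have "\<dots> \<le> exp (real m)" using u by simp
  finally have *: "(real m)^m / fact m \<le> exp (real m)" .
  have "a^m / fact m = ((real m)^m / fact m) * (a / m)^m"
    using assms by (simp add: power_divide)
  also have "\<dots> \<le> exp (real m) * (a / m)^m"
    using * assms by (intro mult_right_mono) auto
  finally show ?thesis .
qed

lemma lambert_pos:
  assumes "z > 0"
  shows "\<exists>w>0. w * exp w = z \<and> lambert_W0 z = w"
proof -
  have "\<exists>w. 0 \<le> w \<and> w \<le> z \<and> w * exp w = z"
    using assms by (intro IVT') (auto intro!: continuous_intros)
  then obtain w where w: "0 \<le> w" "w * exp w = z" by blast
  have wp: "w > 0" using w assms by (cases "w = 0") auto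
  have uniq: "v = w" if "v \<ge> -1" "v * exp v = z" for v
  proof -
    have vp: "v > 0"
    proof (rule ccontr)
      assume "\<not> v > 0" hence "v * exp v \<le> 0" by (simp add: mult_nonpos_nonneg)
      thus False using that assms by simp
    qed
    show ?thesis
    proof (rule ccontr)
      assume "v \<noteq> w"
      then consider "v < w" | "w < v" by linarith
      thus False
      proof cases
        case 1 hence "v * exp v < w * exp w" using vp by (intro mult_strict_mono) auto
        thus False using that w by simp
      next
        case 2 hence "w * exp w < v * exp v" using wp by (intro mult_strict_mono) auto
        thus False using that w by simp
      qed
    qed
  qed
  have "lambert_W0 z = w" unfolding lambert_W0_def
    using wp w uniq by (intro the_equality) auto
  thus ?thesis using wp w by blast
qed

theorem lemma3:
  fixes K :: "real^'d^'n" and \<beta> \<tau> \<epsilon> :: real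
  assumes "norm_2_inf K > 0" and "\<beta> > 0" and "\<tau> > 0" and "\<epsilon> > 0"
  defines "H \<equiv> (\<chi> i l. exp (\<beta> / \<tau>\<^sup>2 * (K $ i \<bullet> K $ l)) :: real^'n^'n)"
    and "T \<equiv> (\<lambda>s::nat. (\<chi> i l. \<Sum>p = 0..s. (1 / fact p) * (\<beta> / \<tau>\<^sup>2 * (K $ i \<bullet> K $ l)) ^ p)
               :: real^'n^'n)"
    and "s_tilde \<equiv> (\<lambda>\<epsilon>'. (ln (real CARD('n) / \<epsilon>') + \<beta> * (norm_2_inf K)\<^sup>2 / \<tau>\<^sup>2) /
            lambert_W0 (ln (real CARD('n) / \<epsilon>') * \<tau>\<^sup>2 / (exp 1 * \<beta> * (norm_2_inf K)\<^sup>2)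
                        + 1 / exp 1))"
  shows "\<forall>s::nat. int s \<ge> \<lfloor>s_tilde \<epsilon>\<rfloor> \<longrightarrow> nuclear_norm (H - T s) \<le> \<epsilon>"
proof (intro allI impI)
  fix s :: nat
  assume hs: "int s \<ge> \<lfloor>s_tilde \<epsilon>\<rfloor>"
  define R where "R = norm_2_inf K"
  define c where "c = \<beta> / \<tau>\<^sup>2"
  define a where "a = c * R\<^sup>2"
  define n where "n = real CARD('n)"
  define L where "L = ln (n / \<epsilon>)"
  define m where "m = Suc s"
  have Rp: "R > 0" using assms(1) by (simp add: R_def)
  have cp: "c > 0" using assms by (simp add: c_def)
  have ap: "a > 0" using Rp cp by (simp add: a_def)
  have np: "n > 0" by (simp add: n_def)
  define A where "A = H - T s"
  have Aent: "A$i$l = tailx s (c * (K$i \<bullet> K$l))" for i l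
    by (simp add: A_def H_def T_def tailx_def c_def)
  have psdA: "psd_matrix A" using psd_tail[OF Aent] cp by simp
  have nn: "nuclear_norm (H - T s) = (\<Sum>i\<in>UNIV. tailx s (c * (K$i \<bullet> K$i)))"
    using nuclear_norm_psd[OF psdA] by (simp add: A_def[symmetric] trace_def Aent)
  have ti: "0 \<le> c * (K$i \<bullet> K$i) \<and> c * (K$i \<bullet> K$i) \<le> a" for i
  proof -
    have "norm (K$i) \<le> R" unfolding R_def norm_2_inf_def by (rule Max_ge) auto
    hence "norm (K$i)^2 \<le> R^2" by (intro power_mono) auto
    thus ?thesis using cp by (simp add: a_def dot_square_norm)
  qed
  show "nuclear_norm (H - T s) \<le> \<epsilon>"
  proof (cases "L + a > 0")
    case False
    have "nuclear_norm (H - T s) \<le> (\<Sum>i\<in>(UNIV::'n set). exp a)"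
      unfolding nn using ti by (intro sum_mono tl_bound2) auto
    also have "\<dots> = n * exp a" by (simp add: n_def)
    also have "\<dots> \<le> \<epsilon>"
    proof -
      have "ln (n / \<epsilon>) \<le> - a" using False by (simp add: L_def)
      hence "n / \<epsilon> \<le> exp (- a)" using np assms(4)
        by (metis divide_pos_pos exp_ln exp_le_cancel_iff)
      hence "n \<le> \<epsilon> * exp (- a)" using assms(4) by (simp add: divide_le_eq mult.commute)
      hence "n * exp a \<le> \<epsilon> * exp (-a) * exp a" by (intro mult_right_mono) auto
      moreover have "\<epsilon> * exp (-a) * exp a = \<epsilon>" by (simp add: exp_minus)
      ultimately show ?thesis by linarith
    qed
    finally show ?thesis .
  next
    case True
    define z where "z = (L + a) / (exp 1 * a)"
    have zp: "z > 0" using True ap by (simp add: z_def)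
    obtain w where w: "w > 0" "w * exp w = z" "lambert_W0 z = w" using lambert_pos[OF zp] by blast
    have zeq: "ln (real CARD('n) / \<epsilon>) * \<tau>\<^sup>2 / (exp 1 * \<beta> * (norm_2_inf K)\<^sup>2) + 1 / exp 1 = z"
      using assms ap by (simp add: z_def L_def n_def a_def c_def R_def field_simps)
    have st: "s_tilde \<epsilon> = (L + a) / w"
      unfolding s_tilde_def zeq w(3) by (simp add: L_def n_def a_def c_def R_def)
    define S where "S = (L + a) / w"
    have S_eq: "S = exp 1 * a * exp w" using w(1,2) ap by (simp add: S_def z_def field_simps)
    have Sp: "S > 0" using S_eq ap by simp
    have lnS: "ln (S / (exp 1 * a)) = w" using S_eq ap by simp
    have Sw: "S * w = L + a" using w(1) by (simp add: S_def)
    have "s_tilde \<epsilon> < real m"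
    proof -
      have "s_tilde \<epsilon> < real_of_int \<lfloor>s_tilde \<epsilon>\<rfloor> + 1" by linarith
      also have "\<dots> \<le> real s + 1" using hs by linarith
      finally show ?thesis by (simp add: m_def)
    qed
    hence Sm: "S < real m" using st S_def by simp
    have mp: "real m > 0" using Sp Sm by linarith
    have key: "L + a \<le> real m * ln (real m / (exp 1 * a))"
    proof -
      have "w \<le> ln (real m / (exp 1 * a))"
        unfolding lnS[symmetric] using Sp Sm ap by (intro ln_mono divide_right_mono) auto
      hence "S * w \<le> real m * ln (real m / (exp 1 * a))"
        using Sm w(1) by (intro mult_mono) auto
      thus ?thesis using Sw by simp
    qed
    have "nuclear_norm (H - T s) \<le> (\<Sum>i\<in>(UNIV::'n set). exp a * a^m / fact m)"
      unfolding nn m_def using ti by (intro sum_mono tl_bound1) auto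
    also have "\<dots> = n * exp a * (a^m / fact m)" by (simp add: n_def)
    also have "\<dots> \<le> n * exp a * (exp (real m) * (a / m)^m)"
      using np ap mp by (intro mult_left_mono fact_bound) auto
    also have "exp (real m) * (a / m)^m = exp (- (real m * ln (real m / (exp 1 * a))))"
    proof -
      have "(a / m)^m = exp (real m * ln (a / m))" using ap mp
        by (simp add: exp_of_nat_mult[symmetric] ln_realpow[symmetric])
      moreover have l1: "ln (a / m) = ln a - ln m" and l2: "ln (real m / (exp 1 * a)) = ln m - 1 - ln a"
        using ap mp by (simp_all add: ln_div ln_mult)
      moreover have "real m * ln (a / m) + real m = - (real m * ln (real m / (exp 1 * a)))"
        unfolding l1 l2 by (simp add: algebra_simps)
      ultimately show ?thesis by (metis exp_add add.commute)
    qed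
    also have "n * exp a * \<dots> \<le> n * exp a * exp (- (L + a))"
      using key np by (intro mult_left_mono) auto
    also have "\<dots> = n * exp (- L)" by (simp add: exp_add[symmetric])
    also have "\<dots> = \<epsilon>" using np assms(4) by (simp add: L_def exp_minus)
    finally show ?thesis .
  qed
qed

end
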